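(* For all integers $m\geq 1$ and $q\geq 1$, the graph $m*Q_q$ divides $Q_{mq}$.
   Context: $Q_q$ denotes the $q$-dimensional hypercube graph (vertices are $q$-tuples of $0$'s and $1$'s, adjacent iff they differ in exactly one coordinate). For a graph $G$ and positive integer $m$, the $m$-stretch $m*G$ is the graph obtained from $G$ by replacing each edge by a path of length $m$ (with $m$ edges), these paths being internally vertex-disjoint. For graphs $H$ and $G$, "$H$ divides $G$" means there is a collection of subgraphs $H_i$ of $G$, each isomorphic to $H$, such that $E(G)$ is the disjoint union of the edge sets $E(H_i)$. *)

theory Defs
  imports Main
begin

type_synonym 'a graph = "'a set \<times> 'a set set"

definition verts :: "'a graph \<Rightarrow> 'a set" where "verts G = fst G"
definition edges :: "'a graph \<Rightarrow> 'a set set" where "edges G = snd G"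

definition is_graph :: "'a graph \<Rightarrow> bool" where
  "is_graph G \<longleftrightarrow> (\<forall>e\<in>edges G. e \<subseteq> verts G \<and> card e = 2)"

definition subgraph :: "'a graph \<Rightarrow> 'a graph \<Rightarrow> bool" where
  "subgraph K G \<longleftrightarrow> is_graph K \<and> verts K \<subseteq> verts G \<and> edges K \<subseteq> edges G"

definition graph_iso :: "'b graph \<Rightarrow> 'a graph \<Rightarrow> bool" where
  "graph_iso H K \<longleftrightarrow> (\<exists>f. bij_betw f (verts H) (verts K) \<and>
     (\<forall>u\<in>verts H. \<forall>v\<in>verts H. {u, v} \<in> edges H \<longleftrightarrow> {f u, f v} \<in> edges K))"

definition graph_divides :: "'b graph \<Rightarrow> 'a graph \<Rightarrow> bool" where
  "graph_divides H G \<longleftrightarrow> (\<exists>S. (\<forall>K\<in>S. subgraph K G \<and> graph_iso H K) \<and>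
     (\<Union>K\<in>S. edges K) = edges G \<and>
     (\<forall>K1\<in>S. \<forall>K2\<in>S. K1 \<noteq> K2 \<longrightarrow> edges K1 \<inter> edges K2 = {}))"

definition hypercube :: "nat \<Rightarrow> bool list graph" where
  "hypercube q = ({u. length u = q},
     {{u, v} | u v. length u = q \<and> length v = q \<and> card {i. i < q \<and> u ! i \<noteq> v ! i} = 1})"

text \<open>The m-stretch of G: each edge e = {a,b} (with an arbitrarily chosen orientation (a,b))
  is replaced by the path a = w_0, w_1, ..., w_m = b, where the internal vertices
  w_i = Inr (e, i), 0 < i < m, are new and distinct for distinct edges.\<close>
definition orient :: "'a set \<Rightarrow> 'a \<times> 'a" where
  "orient e = (SOME p. e = {fst p, snd p})"

definition path_vertex :: "nat \<Rightarrow> 'a set \<Rightarrow> nat \<Rightarrow> 'a + ('a set \<times> nat)" where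
  "path_vertex m e i = (if i = 0 then Inl (fst (orient e))
                        else if i = m then Inl (snd (orient e))
                        else Inr (e, i))"

definition stretch :: "nat \<Rightarrow> 'a graph \<Rightarrow> ('a + ('a set \<times> nat)) graph" where
  "stretch m G = (Inl ` verts G \<union> {Inr (e, i) | e i. e \<in> edges G \<and> 0 < i \<and> i < m},
     {{path_vertex m e i, path_vertex m e (Suc i)} | e i. e \<in> edges G \<and> i < m})"

end

theory Submission
  imports Defs
begin
definition L :: "nat \<Rightarrow> nat set \<Rightarrow> bool list" where
  "L n X = map (\<lambda>i. i \<in> X) [0..<n]"

lemma L_length[simp]: "length (L n X) = n" by (simp add: L_def)
lemma L_nth[simp]: "i < n \<Longrightarrow> L n X ! i = (i \<in> X)" by (simp add: L_def)

lemma L_inj: "X \<subseteq> {..<n} \<Longrightarrow> Y \<subseteq> {..<n} \<Longrightarrow> L n X = L n Y \<Longrightarrow> X = Y"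
proof -
  assume a: "X \<subseteq> {..<n}" "Y \<subseteq> {..<n}" "L n X = L n Y"
  have "\<forall>i<n. (i \<in> X) = (i \<in> Y)" using a(3) by (metis L_nth)
  thus ?thesis using a(1,2) by blast
qed

lemma L_of: "length u = n \<Longrightarrow> u = L n {i. i < n \<and> u ! i}"
  by (rule nth_equalityI) auto

lemma card_sd_parity:
  assumes "finite A" "finite B"
  shows "card (sym_diff A B) + 2 * card (A \<inter> B) = card A + card B"
proof -
  have d: "(A - B) \<inter> (B - A) = {}" by blast
  have "card (sym_diff A B) = card (A - B) + card (B - A)"
    using assms d by (simp add: card_Un_disjoint)
  moreover have "card (A - B) + card (A \<inter> B) = card A"
    using assms by (metis card_Int_Diff add.commute)
  moreover have "card (B - A) + card (A \<inter> B) = card B"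
    using assms by (metis Int_commute card_Int_Diff add.commute)
  ultimately show ?thesis by linarith
qed

lemma even_card_sd:
  assumes "finite A" "finite B"
  shows "even (card (sym_diff A B)) \<longleftrightarrow> (even (card A) \<longleftrightarrow> even (card B))"
  using card_sd_parity[OF assms] by (metis even_add even_mult_iff even_numeral)

lemma hyp_edge_sets:
  assumes "X \<subseteq> {..<n}" "i < n"
  shows "{L n X, L n (sym_diff X {i})} \<in> edges (hypercube n)"
proof -
  have "\<And>k. (k < n \<and> L n X ! k \<noteq> L n (sym_diff X {i}) ! k) \<longleftrightarrow> k = i"
    using assms(2) by (case_tac "k < n") auto
  hence c: "card {k. k < n \<and> L n X ! k \<noteq> L n (sym_diff X {i}) ! k} = 1" by simp
  show ?thesis unfolding hypercube_def edges_def snd_conv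
    using c L_length by blast
qed
lemma hyp_edge_cases:
  assumes "e \<in> edges (hypercube n)"
  obtains X i where "X \<subseteq> {..<n}" "i < n" "e = {L n X, L n (sym_diff X {i})}"
proof -
  obtain u v where e: "e = {u,v}" "length u = n" "length v = n"
     "card {i. i < n \<and> u ! i \<noteq> v ! i} = 1"
    using assms unfolding hypercube_def edges_def by auto
  then obtain i where i: "{i. i < n \<and> u ! i \<noteq> v ! i} = {i}" by (meson card_1_singletonE)
  define X where "X = {k. k < n \<and> u ! k}"
  have iin: "i < n" "u ! i \<noteq> v ! i" using i by blast+
  have oth: "\<And>k. k < n \<Longrightarrow> k \<noteq> i \<Longrightarrow> u ! k = v ! k" using i by blast
  have u: "u = L n X" using L_of[OF e(2)] unfolding X_def .
  have v: "v = L n (sym_diff X {i})"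
  proof (rule nth_equalityI)
    show "length v = length (L n (sym_diff X {i}))" using e by simp
    fix k assume "k < length v"
    hence k: "k < n" using e by simp
    show "v ! k = L n (sym_diff X {i}) ! k"
    proof (cases "k = i")
      case True then show ?thesis using iin k unfolding X_def by simp
    next
      case False
      then show ?thesis using oth[OF k False] k unfolding X_def by simp
    qed
  qed
  show ?thesis
  proof (rule that[of X i])
    show "X \<subseteq> {..<n}" unfolding X_def by blast
    show "i < n" by fact
    show "e = {L n X, L n (sym_diff X {i})}" unfolding e(1) u[symmetric] v[symmetric] ..
  qed
qed
definition flip :: "bool list \<Rightarrow> nat \<Rightarrow> bool list" where
  "flip u j = u[j := \<not> u ! j]"

lemma cube_edge_cases:
  assumes "e \<in> edges (hypercube q)"
  obtains u j where "length u = q" "j < q" "e = {u, flip u j}"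
proof -
  obtain u v where e: "e = {u,v}" "length u = q" "length v = q"
     "card {i. i < q \<and> u ! i \<noteq> v ! i} = 1"
    using assms unfolding hypercube_def edges_def by auto
  then obtain j where j: "{i. i < q \<and> u ! i \<noteq> v ! i} = {j}" by (meson card_1_singletonE)
  have "j < q" using j by auto
  have "v = flip u j"
  proof (rule nth_equalityI)
    show "length v = length (flip u j)" using e by (simp add: flip_def)
    fix k assume "k < length v"
    thus "v ! k = flip u j ! k" using j e by (cases "k = j") (auto simp: flip_def)
  qed
  thus ?thesis using that e \<open>j < q\<close> by blast
qed

lemma cube_edge_intro:
  assumes "length u = q" "j < q"
  shows "{u, flip u j} \<in> edges (hypercube q)"
proof -
  have "{i. i < q \<and> u ! i \<noteq> flip u j ! i} = {j}"
    using assms by (auto simp: flip_def nth_list_update)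
  thus ?thesis using assms unfolding hypercube_def edges_def
    by simp (rule exI[of _ u], rule exI[of _ "flip u j"], simp add: flip_def)
qed

lemma image_graph_iso:
  assumes inj: "inj_on g (verts H)" and sub: "\<forall>\<epsilon>\<in>edges H. \<epsilon> \<subseteq> verts H"
  shows "graph_iso H (g ` verts H, (\<lambda>\<epsilon>. g ` \<epsilon>) ` edges H)"
  unfolding graph_iso_def
proof (intro exI[of _ g] conjI ballI)
  show "bij_betw g (verts H) (verts (g ` verts H, (`) g ` edges H))"
    using inj by (simp add: verts_def inj_on_imp_bij_betw)
  fix u v assume uv: "u \<in> verts H" "v \<in> verts H"
  show "({u, v} \<in> edges H) = ({g u, g v} \<in> edges (g ` verts H, (`) g ` edges H))"
  proof
    assume "{u, v} \<in> edges H"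
    then have "g ` {u,v} \<in> (`) g ` edges H" by (rule imageI)
    then show "{g u, g v} \<in> edges (g ` verts H, (`) g ` edges H)"
      unfolding edges_def by simp
  next
    assume "{g u, g v} \<in> edges (g ` verts H, (`) g ` edges H)"
    then obtain \<epsilon> where e: "\<epsilon> \<in> edges H" "{g u, g v} = g ` \<epsilon>"
      unfolding edges_def by auto
    have ge: "g ` {u, v} = g ` \<epsilon>" using e(2) by simp
    have s1: "{u,v} \<subseteq> verts H" using uv by blast
    have s2: "\<epsilon> \<subseteq> verts H" using sub e(1) by blast
    have "{u,v} = \<epsilon>" using inj_on_image_eq_iff[OF inj s1 s2] ge by simp
    thus "{u, v} \<in> edges H" using e by simp
  qed
qed

lemma flip_length[simp]: "length (flip u j) = length u" by (simp add: flip_def)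
lemma flip_nth: "j < length u \<Longrightarrow> flip u j ! k = (if k = j then \<not> u ! j else u ! k)"
  by (simp add: flip_def nth_list_update)
lemma flip_flip[simp]: "flip (flip u j) j = u"
  by (cases "j < length u") (simp_all add: flip_def list_update_beyond)
lemma flip_neq: "j < length u \<Longrightarrow> flip u j \<noteq> u"
proof
  assume "j < length u" "flip u j = u"
  then have "flip u j ! j = u ! j" by simp
  thus False using flip_nth[OF \<open>j < length u\<close>, of j] by simp
qed

lemma orient_cases:
  assumes "j < length u"
  shows "orient {u, flip u j} = (u, flip u j) \<or> orient {u, flip u j} = (flip u j, u)"
proof -
  let ?p = "orient {u, flip u j}"
  have "{u, flip u j} = {fst ?p, snd ?p}"
    unfolding orient_def by (rule someI[of _ "(u, flip u j)"]) simp
  then have "(fst ?p = u \<and> snd ?p = flip u j) \<or> (fst ?p = flip u j \<and> snd ?p = u)"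
    by (metis doubleton_eq_iff)
  thus ?thesis by (metis prod.collapse)
qed

lemma orient_edge:
  assumes "j < length u"
  obtains a where "fst (orient {u, flip u j}) = a" "snd (orient {u, flip u j}) = flip a j"
    "length a = length u" "{u, flip u j} = {a, flip a j}" "j < length a"
proof -
  from orient_cases[OF assms] show ?thesis
  proof
    assume h: "orient {u, flip u j} = (u, flip u j)"
    show ?thesis by (rule that[of u]) (use h assms in auto)
  next
    assume h: "orient {u, flip u j} = (flip u j, u)"
    show ?thesis by (rule that[of "flip u j"]) (use h assms in \<open>auto simp: insert_commute\<close>)
  qed
qed

definition dir :: "bool list set \<Rightarrow> nat" where
  "dir e = (LEAST k. fst (orient e) ! k \<noteq> snd (orient e) ! k)"

lemma dir_eq:
  assumes "j < length u"
  shows "dir {u, flip u j} = j"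
proof -
  obtain a where a: "fst (orient {u, flip u j}) = a" "snd (orient {u, flip u j}) = flip a j"
     "j < length a" using orient_edge[OF assms] by metis
  have "(LEAST k. a ! k \<noteq> flip a j ! k) = j"
    by (rule Least_equality) (use a(3) in \<open>auto simp: flip_nth split: if_splits\<close>)
  thus ?thesis unfolding dir_def a(1,2) .
qed

locale cube =
  fixes m q :: nat
  assumes m1: "1 \<le> m" and q1: "1 \<le> q"
begin

definition P :: "nat \<Rightarrow> nat \<Rightarrow> nat set" where "P j t = {j*m..<j*m+t}"
definition B :: "bool list \<Rightarrow> nat set" where "B u = {i. i < m*q \<and> u ! (i div m)}"

lemma mpos: "0 < m" using m1 by simp

lemma div_block: "i div m = j \<longleftrightarrow> j*m \<le> i \<and> i < j*m + m"
proof -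
  have "i div m = j \<longleftrightarrow> j \<le> i div m \<and> i div m < Suc j" by auto
  also have "\<dots> \<longleftrightarrow> j*m \<le> i \<and> i < Suc j * m"
    using mpos by (simp add: less_eq_div_iff_mult_less_eq div_less_iff_less_mult)
  finally show ?thesis by (simp add: add.commute)
qed

lemma P_mem: "i \<in> P j t \<longleftrightarrow> j*m \<le> i \<and> i < j*m + t" by (simp add: P_def)

lemma P_sub: "t \<le> m \<Longrightarrow> j < q \<Longrightarrow> P j t \<subseteq> {..<m*q}"
proof
  fix i assume "t \<le> m" "j < q" "i \<in> P j t"
  then have "i < j*m + m" by (simp add: P_def)
  also have "\<dots> = Suc j * m" by simp
  also have "\<dots> \<le> q * m" using \<open>j < q\<close> by (intro mult_right_mono) auto
  finally show "i \<in> {..<m*q}" by (simp add: mult.commute)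
qed

lemma P_m: "i \<in> P j m \<longleftrightarrow> i div m = j" by (simp add: P_def div_block)

lemma P_card[simp]: "card (P j t) = t" by (simp add: P_def)

lemma P_inj: "P j t = P j s \<Longrightarrow> t = s" by (metis P_card)

lemma P_Suc: "P j (Suc t) = insert (j*m+t) (P j t)" by (auto simp: P_def)

lemma B_sub: "B u \<subseteq> {..<m*q}" by (auto simp: B_def)

lemma B_mem: "i \<in> B u \<longleftrightarrow> i < m*q \<and> u ! (i div m)" by (simp add: B_def)

lemma km_lt: "k < q \<Longrightarrow> k*m + m - 1 < m*q \<and> k*m < m*q"
proof -
  assume "k < q"
  then have "Suc k * m \<le> q * m" by (intro mult_right_mono) auto
  then have h: "k*m + m \<le> m*q" by (simp add: mult.commute)
  show ?thesis using mpos h by (intro conjI) arith+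
qed

lemma km_div: "(k*m) div m = k" "(k*m + m - 1) div m = k"
  using mpos by (auto simp: div_block)

lemma B_first: "k < q \<Longrightarrow> k*m \<in> B u \<longleftrightarrow> u ! k"
  using km_lt km_div by (simp add: B_mem)

lemma B_last: "k < q \<Longrightarrow> k*m + m - 1 \<in> B u \<longleftrightarrow> u ! k"
  using km_lt km_div by (simp add: B_mem)

lemma B_flip: "length u = q \<Longrightarrow> j < q \<Longrightarrow> B (flip u j) = sym_diff (B u) (P j m)"
proof (rule set_eqI)
  fix i assume u: "length u = q" "j < q"
  show "i \<in> B (flip u j) \<longleftrightarrow> i \<in> sym_diff (B u) (P j m)"
  proof (cases "i div m = j")
    case True
    then have "i < m*q" using P_sub[of m j] u P_m by auto
    then show ?thesis using True u by (auto simp: B_mem P_m flip_nth)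
  next
    case False
    then show ?thesis using u by (auto simp: B_mem P_m flip_nth)
  qed
qed

lemma B_inj: "length u = q \<Longrightarrow> length v = q \<Longrightarrow> B u = B v \<Longrightarrow> u = v"
proof (rule nth_equalityI)
  assume "length u = q" "length v = q" "B u = B v"
  then show "length u = length v" by simp
  fix i assume "i < length u"
  then show "u ! i = v ! i" using B_first[of i u] B_first[of i v] \<open>length u = q\<close> \<open>B u = B v\<close> by simp
qed

lemma P_first: "0 < t \<Longrightarrow> j*m \<in> P j t" by (simp add: P_def)
lemma P_last: "t < m \<Longrightarrow> j*m + m - 1 \<notin> P j t" using mpos by (auto simp: P_def)
lemma P_other: "k \<noteq> j \<Longrightarrow> t \<le> m \<Longrightarrow> k*m \<notin> P j t \<and> k*m + m - 1 \<notin> P j t"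
proof -
  assume a: "k \<noteq> j" "t \<le> m"
  have "P j t \<subseteq> P j m" using a(2) by (auto simp: P_def)
  moreover have "k*m \<notin> P j m" "k*m + m - 1 \<notin> P j m" using km_div a(1) by (auto simp: P_m)
  ultimately show ?thesis by blast
qed

lemma finite_B[simp]: "finite (B u)" by (simp add: B_def)
lemma finite_P[simp]: "finite (P j t)" by (simp add: P_def)

lemma B_union: "length u = q \<Longrightarrow> B u = (\<Union>k\<in>{k. k < q \<and> u ! k}. P k m)"
proof (rule set_eqI)
  fix i assume u: "length u = q"
  show "i \<in> B u \<longleftrightarrow> i \<in> (\<Union>k\<in>{k. k < q \<and> u ! k}. P k m)"
  proof
    assume "i \<in> B u"
    then have "i < m*q" "u ! (i div m)" by (auto simp: B_mem)
    moreover have "i div m < q" using \<open>i < m*q\<close> by (simp add: div_less_iff_less_mult mpos mult.commute)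
    ultimately show "i \<in> (\<Union>k\<in>{k. k < q \<and> u ! k}. P k m)" by (auto simp: P_m)
  next
    assume "i \<in> (\<Union>k\<in>{k. k < q \<and> u ! k}. P k m)"
    then obtain k where "k < q" "u ! k" "i \<in> P k m" by auto
    then show "i \<in> B u" using P_sub[of m k] by (auto simp: B_mem P_m)
  qed
qed

lemma even_B: "even m \<Longrightarrow> length u = q \<Longrightarrow> even (card (B u))"
proof -
  assume em: "even m" and u: "length u = q"
  have "card (B u) = (\<Sum>k\<in>{k. k < q \<and> u ! k}. card (P k m))"
    unfolding B_union[OF u]
  proof (rule card_UN_disjoint)
    show "finite {k. k < q \<and> u ! k}" by simp
    show "\<forall>i\<in>{k. k < q \<and> u ! k}. finite (P i m)" by simp
    show "\<forall>i\<in>{k. k < q \<and> u ! k}. \<forall>j\<in>{k. k < q \<and> u ! k}. i \<noteq> j \<longrightarrow> P i m \<inter> P j m = {}"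
      by (auto simp: P_m)
  qed
  then show ?thesis using em by (simp add: dvd_sum)
qed

end

context cube begin

definition st :: "nat set \<Rightarrow> nat set \<Rightarrow> nat \<Rightarrow> bool" where
  "st Z W j \<longleftrightarrow> even (card W) \<and> (even m \<longrightarrow> (j*m \<in> W \<longleftrightarrow> 0 \<in> Z))"

definition Good :: "nat set \<Rightarrow> bool" where
  "Good Z \<longleftrightarrow> Z \<subseteq> {..<m*q} \<and> (\<forall>k<q. (k \<noteq> 0 \<or> odd m) \<longrightarrow> k*m \<notin> Z) \<and> (even m \<longrightarrow> even (card Z))"

lemma Good_finite: "Good Z \<Longrightarrow> finite Z"
  unfolding Good_def using finite_subset by blast

lemma st_flip:
  assumes G: "Good Z" and a: "length a = q" and j: "j < q"
  shows "st Z (sym_diff Z (B (flip a j))) j \<longleftrightarrow> \<not> st Z (sym_diff Z (B a)) j"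
proof -
  define W where "W = sym_diff Z (B a)"
  have fZ: "finite Z" using Good_finite[OF G] .
  have W': "sym_diff Z (B (flip a j)) = sym_diff W (P j m)"
    unfolding W_def B_flip[OF a j] by blast
  have fW: "finite W" using fZ by (simp add: W_def)
  have par: "even (card (sym_diff W (P j m))) \<longleftrightarrow> (even (card W) \<longleftrightarrow> even m)"
    using even_card_sd[OF fW finite_P] by simp
  show ?thesis
  proof (cases "even m")
    case False
    then show ?thesis unfolding W' W_def[symmetric] st_def using par by simp
  next
    case True
    have "even (card W)"
      using even_card_sd[OF fZ finite_B] G True even_B[OF True a] unfolding W_def Good_def by simp
    moreover have "j*m \<in> P j m" using mpos by (simp add: P_def)
    ultimately show ?thesis unfolding W' W_def[symmetric] st_def using par True by auto
  qed
qed

lemma exists_good: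
  assumes W: "W \<subseteq> {..<m*q}" "even (card W)" and j: "j < q"
  shows "\<exists>Z w. Good Z \<and> length w = q \<and> W = sym_diff Z (B w) \<and> st Z W j"
proof -
  define w where "w = map (\<lambda>k. if k = 0 \<and> even m then (0 \<in> W) \<noteq> (j*m \<in> W) else k*m \<in> W) [0..<q]"
  define Z where "Z = sym_diff W (B w)"
  have lw: "length w = q" by (simp add: w_def)
  have fW: "finite W" using W(1) finite_subset by blast
  have WZ: "W = sym_diff Z (B w)" unfolding Z_def by blast
  have Zsub: "Z \<subseteq> {..<m*q}" using W(1) B_sub unfolding Z_def by blast
  have c1: "\<forall>k<q. (k \<noteq> 0 \<or> odd m) \<longrightarrow> k*m \<notin> Z"
  proof (intro allI impI)
    fix k assume k: "k < q" "k \<noteq> 0 \<or> odd m"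
    have "w ! k = (k*m \<in> W)" using k by (auto simp: w_def)
    then show "k*m \<notin> Z" using B_first[OF k(1), of w] unfolding Z_def by auto
  qed
  have c2: "even m \<longrightarrow> even (card Z)"
    using even_card_sd[OF fW finite_B, of w] even_B[OF _ lw] W(2) unfolding Z_def by simp
  have q0: "0 < q" using q1 by simp
  have "st Z W j"
  proof -
    have "even m \<longrightarrow> (0 \<in> Z \<longleftrightarrow> j*m \<in> W)"
    proof
      assume em: "even m"
      have "w ! 0 = ((0 \<in> W) \<noteq> (j*m \<in> W))" using q0 em by (simp add: w_def)
      moreover have "0 \<in> B w \<longleftrightarrow> w ! 0" using B_first[OF q0, of w] by simp
      ultimately show "0 \<in> Z \<longleftrightarrow> j*m \<in> W" unfolding Z_def by auto
    qed
    then show ?thesis using W(2) unfolding st_def by auto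
  qed
  moreover have "Good Z" unfolding Good_def using Zsub c1 c2 by blast
  ultimately show ?thesis using lw WZ by blast
qed

lemma unique_good:
  assumes G: "Good Z" "Good Z'" and lw: "length w = q" "length w' = q"
    and eq: "sym_diff Z (B w) = sym_diff Z' (B w')"
    and s: "st Z (sym_diff Z (B w)) j" "st Z' (sym_diff Z' (B w')) j" and j: "j < q"
  shows "Z = Z'"
proof -
  have "w = w'"
  proof (rule nth_equalityI)
    show "length w = length w'" using lw by simp
    fix k assume "k < length w"
    then have k: "k < q" using lw by simp
    have e1: "k*m \<in> sym_diff Z (B w) \<longleftrightarrow> k*m \<in> sym_diff Z' (B w')" using eq by simp
    have zz: "k*m \<in> Z \<longleftrightarrow> k*m \<in> Z'"
    proof (cases "k \<noteq> 0 \<or> odd m")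
      case True
      then show ?thesis using G k unfolding Good_def by blast
    next
      case False
      then have "k = 0" "even m" by auto
      then show ?thesis using s eq unfolding st_def by simp
    qed
    show "w ! k = w' ! k" using e1 zz B_first[OF k, of w] B_first[OF k, of w'] by blast
  qed
  then show ?thesis using eq by blast
qed

end

context cube begin

definition g :: "nat set \<Rightarrow> bool list + (bool list set \<times> nat) \<Rightarrow> bool list" where
 "g Z x = (case x of Inl v \<Rightarrow> L (m*q) (sym_diff Z (B v))
   | Inr p \<Rightarrow> (if st Z (sym_diff Z (B (fst (orient (fst p))))) (dir (fst p))
        then L (m*q) (sym_diff Z (sym_diff (B (fst (orient (fst p)))) (P (dir (fst p)) (snd p))))
        else L (m*q) (sym_diff Z (sym_diff (B (snd (orient (fst p)))) (P (dir (fst p)) (m - snd p))))))"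

definition Y :: "nat set \<Rightarrow> bool list \<Rightarrow> nat \<Rightarrow> nat \<Rightarrow> nat set" where
  "Y Z a j i = (if st Z (sym_diff Z (B a)) j then sym_diff (B a) (P j i)
                else sym_diff (B (flip a j)) (P j (m - i)))"

lemma edge_normal:
  assumes "e \<in> edges (hypercube q)"
  obtains a j where "orient e = (a, flip a j)" "e = {a, flip a j}" "length a = q" "j < q"
proof -
  obtain u j where u: "length u = q" "j < q" "e = {u, flip u j}"
    using cube_edge_cases[OF assms] by metis
  obtain a where a: "fst (orient {u, flip u j}) = a" "snd (orient {u, flip u j}) = flip a j"
    "length a = length u" "{u, flip u j} = {a, flip a j}" "j < length a"
    using orient_edge[of j u] u by metis
  show ?thesis
    by (rule that[of a j]) (use a u in \<open>auto simp: prod_eq_iff\<close>)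
qed

lemma g_pv:
  assumes o: "orient e = (a, flip a j)" and e: "e = {a, flip a j}" and a: "length a = q"
    and j: "j < q" and i: "i \<le> m"
  shows "g Z (path_vertex m e i) = L (m*q) (sym_diff Z (Y Z a j i))"
proof -
  have d: "dir e = j" using dir_eq[of j a] e j a by simp
  have Bf: "B (flip a j) = sym_diff (B a) (P j m)" using B_flip[OF a j] .
  have P0: "P j 0 = {}" by (simp add: P_def)
  show ?thesis
  proof (cases "i = 0")
    case True
    then show ?thesis unfolding path_vertex_def g_def Y_def using o P0 Bf
      by (auto intro!: arg_cong[where f="L (m*q)"])
  next
    case False
    show ?thesis
    proof (cases "i = m")
      case True
      then show ?thesis unfolding path_vertex_def g_def Y_def using o P0 Bf False
        by (auto intro!: arg_cong[where f="L (m*q)"])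
    next
      case False2: False
      then show ?thesis unfolding path_vertex_def g_def Y_def using o d False by simp
    qed
  qed
qed

lemma Y_sub: "length a = q \<Longrightarrow> j < q \<Longrightarrow> i \<le> m \<Longrightarrow> Y Z a j i \<subseteq> {..<m*q}"
  unfolding Y_def using B_sub P_sub[of i j] P_sub[of "m-i" j] by auto

definition mixed :: "nat \<Rightarrow> nat set \<Rightarrow> bool" where
  "mixed k S \<longleftrightarrow> (k*m \<in> S) \<noteq> (k*m + m - 1 \<in> S)"

lemma mixed_B: "k < q \<Longrightarrow> \<not> mixed k (B v)"
  unfolding mixed_def using B_first B_last by simp

lemma mixed_BP: "k < q \<Longrightarrow> 0 < s \<Longrightarrow> s < m \<Longrightarrow> mixed k (sym_diff (B v) (P j s)) \<longleftrightarrow> k = j"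
proof -
  assume k: "k < q" and s: "0 < s" "s < m"
  show ?thesis
  proof (cases "k = j")
    case True
    then show ?thesis unfolding mixed_def using B_first[OF k] B_last[OF k] P_first[OF s(1)] P_last[OF s(2)]
      by auto
  next
    case False
    then show ?thesis unfolding mixed_def using B_first[OF k] B_last[OF k] P_other[OF False, of s] s
      by auto
  qed
qed

lemma Y_mixed:
  assumes a: "length a = q" and j: "j < q" and i: "0 < i" "i < m" and k: "k < q"
  shows "mixed k (Y Z a j i) \<longleftrightarrow> k = j"
  unfolding Y_def using mixed_BP[OF k] i by auto

lemma Y_other:
  assumes a: "length a = q" and j: "j < q" and i: "i \<le> m" and k: "k < q" "k \<noteq> j"
  shows "k*m \<in> Y Z a j i \<longleftrightarrow> a ! k"
proof -
  have "k*m \<notin> P j i" "k*m \<notin> P j (m - i)" using P_other[OF k(2)] i by auto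
  moreover have "flip a j ! k = a ! k" using flip_nth[of j a k] a j k by simp
  ultimately show ?thesis unfolding Y_def using B_first[OF k(1)] by auto
qed

end

lemma verts_stretch: "verts (stretch m G) = Inl ` verts G \<union> {Inr (e, i) | e i. e \<in> edges G \<and> 0 < i \<and> i < m}"
  by (simp add: stretch_def verts_def edges_def)

lemma edges_stretch: "edges (stretch m G) = {{path_vertex m e i, path_vertex m e (Suc i)} | e i. e \<in> edges G \<and> i < m}"
  by (simp add: stretch_def verts_def edges_def)

lemma verts_hyp: "verts (hypercube n) = {u. length u = n}"
  by (simp add: hypercube_def verts_def)

lemma agree_flip:
  assumes "length x = q" "length y = q" "j < q" "\<forall>k<q. k \<noteq> j \<longrightarrow> x ! k = y ! k"
  shows "{y, flip y j} = {x, flip x j}"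
proof (cases "y ! j = x ! j")
  case True
  have "y = x" by (rule nth_equalityI) (use assms True in auto)
  then show ?thesis by simp
next
  case False
  have "y = flip x j" by (rule nth_equalityI) (use assms False in \<open>auto simp: flip_nth\<close>)
  then show ?thesis by auto
qed

context cube begin

lemma L_sd_inj:
  assumes "Z \<subseteq> {..<m*q}" "Y1 \<subseteq> {..<m*q}" "Y2 \<subseteq> {..<m*q}"
    "L (m*q) (sym_diff Z Y1) = L (m*q) (sym_diff Z Y2)"
  shows "Y1 = Y2"
proof -
  have "sym_diff Z Y1 = sym_diff Z Y2"
    by (rule L_inj[OF _ _ assms(4)]) (use assms(1-3) in blast)+
  then show ?thesis by blast
qed

lemma g_Inl: "g Z (Inl v) = L (m*q) (sym_diff Z (B v))" by (simp add: g_def)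

lemma g_Inr:
  assumes o: "orient e = (a, flip a j)" and e: "e = {a, flip a j}" and a: "length a = q"
    and j: "j < q" and i: "0 < i" "i < m"
  shows "g Z (Inr (e, i)) = L (m*q) (sym_diff Z (Y Z a j i))"
  using g_pv[OF o e a j, of i Z] i by (simp add: path_vertex_def)

lemma inj_g:
  assumes G: "Good Z"
  shows "inj_on (g Z) (verts (stretch m (hypercube q)))"
proof (rule inj_onI)
  have Zs: "Z \<subseteq> {..<m*q}" using G by (simp add: Good_def)
  fix x y assume x: "x \<in> verts (stretch m (hypercube q))" and y: "y \<in> verts (stretch m (hypercube q))"
    and gxy: "g Z x = g Z y"
  show "x = y"
  proof (cases x)
    case (Inl v)
    then have v: "length v = q" using x by (auto simp: verts_stretch verts_hyp)
    show ?thesis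
    proof (cases y)
      case (Inl v')
      then have v': "length v' = q" using y by (auto simp: verts_stretch verts_hyp)
      have "B v = B v'" using L_sd_inj[OF Zs B_sub B_sub] gxy \<open>x = Inl v\<close> Inl by (simp add: g_Inl)
      then show ?thesis using B_inj[OF v v'] \<open>x = Inl v\<close> Inl by simp
    next
      case (Inr p)
      then obtain e i where p: "y = Inr (e,i)" "e \<in> edges (hypercube q)" "0 < i" "i < m"
        using y by (auto simp: verts_stretch)
      obtain a j where n: "orient e = (a, flip a j)" "e = {a, flip a j}" "length a = q" "j < q"
        using edge_normal[OF p(2)] by metis
      have "B v = Y Z a j i"
        using L_sd_inj[OF Zs B_sub Y_sub[OF n(3,4)]] gxy \<open>x = Inl v\<close> p g_Inr[OF n p(3,4)] p(4)
        by (simp add: g_Inl)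
      then have False using mixed_B[OF n(4), of v] Y_mixed[OF n(3,4) p(3,4) n(4)] by simp
      then show ?thesis ..
    qed
  next
    case (Inr p)
    then obtain e i where p: "x = Inr (e,i)" "e \<in> edges (hypercube q)" "0 < i" "i < m"
      using x by (auto simp: verts_stretch)
    obtain a j where n: "orient e = (a, flip a j)" "e = {a, flip a j}" "length a = q" "j < q"
      using edge_normal[OF p(2)] by metis
    have gx: "g Z x = L (m*q) (sym_diff Z (Y Z a j i))" using g_Inr[OF n p(3,4)] p(1) by simp
    show ?thesis
    proof (cases y)
      case (Inl v)
      then have v: "length v = q" using y by (auto simp: verts_stretch verts_hyp)
      have "B v = Y Z a j i"
        using L_sd_inj[OF Zs B_sub Y_sub[OF n(3,4)]] gxy gx Inl p(4)
        by (simp add: g_Inl)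
      then have False using mixed_B[OF n(4), of v] Y_mixed[OF n(3,4) p(3,4) n(4)] by simp
      then show ?thesis ..
    next
      case (Inr p')
      then obtain e' i' where p': "y = Inr (e',i')" "e' \<in> edges (hypercube q)" "0 < i'" "i' < m"
        using y by (auto simp: verts_stretch)
      obtain a' j' where n': "orient e' = (a', flip a' j')" "e' = {a', flip a' j'}" "length a' = q" "j' < q"
        using edge_normal[OF p'(2)] by metis
      have gy: "g Z y = L (m*q) (sym_diff Z (Y Z a' j' i'))" using g_Inr[OF n' p'(3,4)] p'(1) by simp
      have YY: "Y Z a j i = Y Z a' j' i'"
        using L_sd_inj[OF Zs Y_sub[OF n(3,4)] Y_sub[OF n'(3,4)]] gxy gx gy p(4) p'(4) by simp
      have "j = j'"
        using Y_mixed[OF n(3,4) p(3,4) n(4), where Z=Z] Y_mixed[OF n'(3,4) p'(3,4) n(4), where Z=Z] YY by simp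
      have agr: "\<forall>k<q. k \<noteq> j \<longrightarrow> a ! k = a' ! k"
      proof (intro allI impI)
        fix k assume "k < q" "k \<noteq> j"
        then show "a ! k = a' ! k"
          using Y_other[OF n(3,4), of i k Z] Y_other[OF n'(3,4), of i' k Z] YY \<open>j = j'\<close> p(4) p'(4)
          by simp
      qed
      have "e' = e" using agree_flip[OF n(3) n'(3) n(4) agr] n(2) n'(2) \<open>j = j'\<close> by simp
      then have "a' = a" using n(1) n'(1) by simp
      have "i = i'"
      proof (cases "st Z (sym_diff Z (B a)) j")
        case True
        then have "sym_diff (B a) (P j i) = sym_diff (B a) (P j i')"
          using YY \<open>a' = a\<close> \<open>j = j'\<close> by (simp add: Y_def)
        then have "P j i = P j i'" by blast
        then show ?thesis using P_inj by blast
      next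
        case False
        then have "sym_diff (B (flip a j)) (P j (m - i)) = sym_diff (B (flip a j)) (P j (m - i'))"
          using YY \<open>a' = a\<close> \<open>j = j'\<close> by (simp add: Y_def)
        then have "P j (m - i) = P j (m - i')" by blast
        then have "m - i = m - i'" using P_inj by blast
        then show ?thesis using p(4) p'(4) by simp
      qed
      then show ?thesis using p(1) p'(1) \<open>e' = e\<close> by simp
    qed
  qed
qed

end

context cube begin

definition Ed :: "nat set \<Rightarrow> nat \<Rightarrow> nat \<Rightarrow> bool list set" where
  "Ed W j t = {L (m*q) (sym_diff W (P j t)), L (m*q) (sym_diff W (P j (Suc t)))}"

lemma sd_assoc: "sym_diff Z (sym_diff A C) = sym_diff (sym_diff Z A) C" by blast

lemma K_edge_form:
  assumes G: "Good Z" and eps: "\<epsilon> \<in> edges (stretch m (hypercube q))"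
  shows "\<exists>w j t. length w = q \<and> j < q \<and> t < m \<and> st Z (sym_diff Z (B w)) j \<and>
            g Z ` \<epsilon> = Ed (sym_diff Z (B w)) j t"
proof -
  obtain e i where ei: "\<epsilon> = {path_vertex m e i, path_vertex m e (Suc i)}" "e \<in> edges (hypercube q)" "i < m"
    using eps by (auto simp: edges_stretch)
  obtain a j where n: "orient e = (a, flip a j)" "e = {a, flip a j}" "length a = q" "j < q"
    using edge_normal[OF ei(2)] by metis
  have ge: "g Z ` \<epsilon> = {L (m*q) (sym_diff Z (Y Z a j i)), L (m*q) (sym_diff Z (Y Z a j (Suc i)))}"
    using g_pv[OF n, of i Z] g_pv[OF n, of "Suc i" Z] ei(1,3) by simp
  show ?thesis
  proof (cases "st Z (sym_diff Z (B a)) j")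
    case True
    have "g Z ` \<epsilon> = Ed (sym_diff Z (B a)) j i"
      unfolding ge Ed_def Y_def using True by (simp add: sd_assoc)
    then show ?thesis using True n ei(3) by blast
  next
    case False
    define w where "w = flip a j"
    have lw: "length w = q" using n(3) by (simp add: w_def)
    have stw: "st Z (sym_diff Z (B w)) j" using st_flip[OF G n(3,4)] False by (simp add: w_def)
    define t where "t = m - Suc i"
    have t: "t < m" "m - i = Suc t" "m - Suc i = t" using ei(3) by (auto simp: t_def)
    have "g Z ` \<epsilon> = Ed (sym_diff Z (B w)) j t"
      unfolding ge Ed_def Y_def using False t by (simp add: sd_assoc w_def insert_commute)
    then show ?thesis using stw lw n(4) t(1) by blast
  qed
qed

lemma K_edge_intro:
  assumes G: "Good Z" and w: "length w = q" and j: "j < q" and t: "t < m"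
    and s: "st Z (sym_diff Z (B w)) j"
  shows "Ed (sym_diff Z (B w)) j t \<in> (\<lambda>\<epsilon>. g Z ` \<epsilon>) ` edges (stretch m (hypercube q))"
proof -
  define e where "e = {w, flip w j}"
  have eE: "e \<in> edges (hypercube q)" using cube_edge_intro[OF w j] by (simp add: e_def)
  obtain a where a: "fst (orient {w, flip w j}) = a" "snd (orient {w, flip w j}) = flip a j"
    "length a = length w" "{w, flip w j} = {a, flip a j}" "j < length a"
    using orient_edge[of j w] w j by metis
  have n: "orient e = (a, flip a j)" "e = {a, flip a j}" "length a = q" "j < q"
    using a w j by (auto simp: e_def prod_eq_iff)
  have "a = w \<or> a = flip w j" using a(4) by (auto simp: doubleton_eq_iff)
  then show ?thesis
  proof
    assume aw: "a = w"
    have ge: "g Z ` {path_vertex m e t, path_vertex m e (Suc t)} = Ed (sym_diff Z (B w)) j t"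
      using g_pv[OF n, of t Z] g_pv[OF n, of "Suc t" Z] t s aw
      by (simp add: Ed_def Y_def sd_assoc)
    have "{path_vertex m e t, path_vertex m e (Suc t)} \<in> edges (stretch m (hypercube q))"
      using eE t by (auto simp: edges_stretch)
    then show ?thesis using ge by (metis image_eqI)
  next
    assume aw: "a = flip w j"
    then have faw: "flip a j = w" by simp
    have ns: "\<not> st Z (sym_diff Z (B a)) j" using st_flip[OF G n(3,4)] s faw by simp
    define i where "i = m - Suc t"
    have i: "i < m" "m - i = Suc t" "m - Suc i = t" using t by (auto simp: i_def)
    have ge: "g Z ` {path_vertex m e i, path_vertex m e (Suc i)} = Ed (sym_diff Z (B w)) j t"
      using g_pv[OF n, of i Z] g_pv[OF n, of "Suc i" Z] i ns faw
      by (simp add: Ed_def Y_def sd_assoc insert_commute)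
    have "{path_vertex m e i, path_vertex m e (Suc i)} \<in> edges (stretch m (hypercube q))"
      using eE i by (auto simp: edges_stretch)
    then show ?thesis using ge by (metis image_eqI)
  qed
qed

lemma Ed_alt:
  assumes W: "W \<subseteq> {..<m*q}" and j: "j < q" and t: "t < m"
  shows "Ed W j t = {L (m*q) (sym_diff W (P j t)), L (m*q) (sym_diff (sym_diff W (P j t)) {j*m+t})}"
    "sym_diff W (P j t) \<subseteq> {..<m*q}" "j*m+t < m*q"
proof -
  have nin: "j*m+t \<notin> P j t" by (simp add: P_def)
  show "Ed W j t = {L (m*q) (sym_diff W (P j t)), L (m*q) (sym_diff (sym_diff W (P j t)) {j*m+t})}"
    unfolding Ed_def P_Suc using nin by (auto intro!: arg_cong[where f="L (m*q)"])
  show "sym_diff W (P j t) \<subseteq> {..<m*q}" using W P_sub[of t j] t j by auto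
  have "j*m+t \<in> P j (Suc t)" by (simp add: P_def)
  then show "j*m+t < m*q" using P_sub[of "Suc t" j] t j by auto
qed

lemma Ed_edge:
  assumes W: "W \<subseteq> {..<m*q}" and j: "j < q" and t: "t < m"
  shows "Ed W j t \<in> edges (hypercube (m*q))"
  using hyp_edge_sets[OF Ed_alt(2,3)[OF W j t]] Ed_alt(1)[OF W j t] by simp

lemma Ed_card:
  assumes W: "W \<subseteq> {..<m*q}" and j: "j < q" and t: "t < m"
  shows "card (Ed W j t) = 2"
proof -
  let ?X = "sym_diff W (P j t)" and ?i = "j*m+t"
  have "L (m*q) ?X ! ?i \<noteq> L (m*q) (sym_diff ?X {?i}) ! ?i" using Ed_alt(3)[OF W j t] by simp
  then have "L (m*q) ?X \<noteq> L (m*q) (sym_diff ?X {?i})" by metis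
  then show ?thesis using Ed_alt(1)[OF W j t] by simp
qed

lemma Ed_cover:
  assumes "\<epsilon> \<in> edges (hypercube (m*q))"
  shows "\<exists>W j t. W \<subseteq> {..<m*q} \<and> even (card W) \<and> j < q \<and> t < m \<and> \<epsilon> = Ed W j t"
proof -
  obtain X i where X: "X \<subseteq> {..<m*q}" "i < m*q" "\<epsilon> = {L (m*q) X, L (m*q) (sym_diff X {i})}"
    using hyp_edge_cases[OF assms] by metis
  define j where "j = i div m"
  define t where "t = i mod m"
  have it: "i = j*m + t" by (simp add: j_def t_def)
  have t: "t < m" using mpos by (simp add: t_def)
  have j: "j < q" using X(2) mpos by (simp add: j_def div_less_iff_less_mult mult.commute)
  have fX: "finite X" using X(1) finite_subset by blast
  define X0 where "X0 = sym_diff X (P j t)"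
  have fX0: "finite X0" using fX by (simp add: X0_def)
  have X0s: "X0 \<subseteq> {..<m*q}" using X(1) P_sub[of t j] t j by (auto simp: X0_def)
  show ?thesis
  proof (cases "even (card X0)")
    case True
    have e1: "Ed X0 j t = {L (m*q) (sym_diff X0 (P j t)), L (m*q) (sym_diff (sym_diff X0 (P j t)) {i})}"
      using Ed_alt(1)[OF X0s j t] it by simp
    have "sym_diff X0 (P j t) = X" by (auto simp: X0_def)
    then have "Ed X0 j t = \<epsilon>" using e1 X(3) by simp
    then show ?thesis using True X0s j t by blast
  next
    case False
    define W where "W = sym_diff X0 {i}"
    have eW: "even (card W)" using even_card_sd[OF fX0, of "{i}"] False by (simp add: W_def)
    have Ws: "W \<subseteq> {..<m*q}" using X0s X(2) by (auto simp: W_def)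
    have e1: "Ed W j t = {L (m*q) (sym_diff W (P j t)), L (m*q) (sym_diff (sym_diff W (P j t)) {i})}"
      using Ed_alt(1)[OF Ws j t] it by simp
    have h1: "sym_diff W (P j t) = sym_diff X {i}" by (auto simp: W_def X0_def)
    have h2: "sym_diff (sym_diff X {i}) {i} = X" by auto
    have "Ed W j t = \<epsilon>" using e1 X(3) h1 h2 by (simp add: insert_commute)
    then show ?thesis using eW Ws j t by blast
  qed
qed

lemma jt_unique:
  assumes "j*m + t = j'*m + t'" "t < m" "t' < m"
  shows "j = j' \<and> t = t'"
proof -
  have a: "(j*m+t) div m = j" using div_block[of "j*m+t" j] assms(2) by simp
  have b: "(j'*m+t') div m = j'" using div_block[of "j'*m+t'" j'] assms(3) by simp
  have "j = j'" using a b assms(1) by simp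
  then show ?thesis using assms(1) by simp
qed

lemma Ed_unique:
  assumes W: "W \<subseteq> {..<m*q}" "even (card W)" and j: "j < q" and t: "t < m"
    and W': "W' \<subseteq> {..<m*q}" "even (card W')" and j': "j' < q" and t': "t' < m"
    and eq: "Ed W j t = Ed W' j' t'"
  shows "W = W' \<and> j = j'"
proof -
  let ?X = "sym_diff W (P j t)" and ?i = "j*m+t"
  let ?X' = "sym_diff W' (P j' t')" and ?i' = "j'*m+t'"
  have s: "?X \<subseteq> {..<m*q}" "sym_diff ?X {?i} \<subseteq> {..<m*q}" "?X' \<subseteq> {..<m*q}" "sym_diff ?X' {?i'} \<subseteq> {..<m*q}"
    using Ed_alt(2,3)[OF W(1) j t] Ed_alt(2,3)[OF W'(1) j' t'] by auto
  have "{L (m*q) ?X, L (m*q) (sym_diff ?X {?i})} = {L (m*q) ?X', L (m*q) (sym_diff ?X' {?i'})}"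
    using eq Ed_alt(1)[OF W(1) j t] Ed_alt(1)[OF W'(1) j' t'] by simp
  then have "(?X = ?X' \<and> sym_diff ?X {?i} = sym_diff ?X' {?i'}) \<or> (?X = sym_diff ?X' {?i'} \<and> sym_diff ?X {?i} = ?X')"
    using L_inj s unfolding doubleton_eq_iff by metis
  then have ii: "{?i} = {?i'}" and XX: "?X = ?X' \<or> ?X = sym_diff ?X' {?i'}" by blast+
  then have "?i = ?i'" by simp
  then have jj: "j = j'" "t = t'" using jt_unique t t' by blast+
  have fW': "finite W'" using W'(1) finite_subset by blast
  from XX show ?thesis
  proof
    assume "?X = ?X'"
    then show ?thesis using jj by blast
  next
    assume h: "?X = sym_diff ?X' {?i'}"
    have "W = sym_diff W' {?i'}" using h jj by blast
    then have "odd (card W)" using even_card_sd[OF fW', of "{?i'}"] W'(2) by simp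
    then show ?thesis using W(2) by simp
  qed
qed

end

lemma verts_pair[simp]: "verts (a, b) = a" by (simp add: verts_def)
lemma edges_pair[simp]: "edges (a, b) = b" by (simp add: edges_def)

context cube begin

definition K :: "nat set \<Rightarrow> bool list set \<times> bool list set set" where
 "K Z = (g Z ` verts (stretch m (hypercube q)), (\<lambda>\<epsilon>. g Z ` \<epsilon>) ` edges (stretch m (hypercube q)))"

lemma g_len: "length (g Z x) = m*q" by (simp add: g_def split: sum.split)

lemma edges_sub_verts_H: "\<forall>\<epsilon>\<in>edges (stretch m (hypercube q)). \<epsilon> \<subseteq> verts (stretch m (hypercube q))"
proof
  fix \<epsilon> assume "\<epsilon> \<in> edges (stretch m (hypercube q))"
  then obtain e i where ei: "\<epsilon> = {path_vertex m e i, path_vertex m e (Suc i)}" "e \<in> edges (hypercube q)" "i < m"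
    by (auto simp: edges_stretch)
  obtain a j where n: "orient e = (a, flip a j)" "e = {a, flip a j}" "length a = q" "j < q"
    using edge_normal[OF ei(2)] by metis
  have "path_vertex m e k \<in> verts (stretch m (hypercube q))" if "k \<le> m" for k
    using that n ei(2) by (auto simp: path_vertex_def verts_stretch verts_hyp)
  then show "\<epsilon> \<subseteq> verts (stretch m (hypercube q))" using ei by auto
qed

lemma K_iso: "Good Z \<Longrightarrow> graph_iso (stretch m (hypercube q)) (K Z)"
  unfolding K_def by (rule image_graph_iso[OF inj_g edges_sub_verts_H])

lemma K_edges: "Good Z \<Longrightarrow> \<epsilon> \<in> edges (K Z) \<Longrightarrow>
   \<exists>w j t. length w = q \<and> j < q \<and> t < m \<and> st Z (sym_diff Z (B w)) j \<and> \<epsilon> = Ed (sym_diff Z (B w)) j t"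
  unfolding K_def using K_edge_form by auto

lemma K_sub: assumes G: "Good Z" shows "subgraph (K Z) (hypercube (m*q))"
proof -
  have Zs: "Z \<subseteq> {..<m*q}" using G by (simp add: Good_def)
  have ee: "\<epsilon> \<in> edges (hypercube (m*q)) \<and> card \<epsilon> = 2" if eK: "\<epsilon> \<in> edges (K Z)" for \<epsilon>
  proof -
    obtain w j t where h: "length w = q" "j < q" "t < m" "\<epsilon> = Ed (sym_diff Z (B w)) j t"
      using K_edges[OF G eK] by blast
    have Ws: "sym_diff Z (B w) \<subseteq> {..<m*q}" using Zs B_sub by blast
    show ?thesis using Ed_edge[OF Ws h(2,3)] Ed_card[OF Ws h(2,3)] h(4) by simp
  qed
  have ev: "\<epsilon> \<subseteq> verts (K Z)" if "\<epsilon> \<in> edges (K Z)" for \<epsilon>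
    using that edges_sub_verts_H unfolding K_def by auto
  have vv: "verts (K Z) \<subseteq> verts (hypercube (m*q))"
    unfolding K_def verts_hyp using g_len by auto
  show ?thesis unfolding subgraph_def is_graph_def using ee ev vv by blast
qed

lemma main: "graph_divides (stretch m (hypercube q)) (hypercube (m*q))"
  unfolding graph_divides_def
proof (intro exI[of _ "K ` {Z. Good Z}"] conjI)
  show "\<forall>K1\<in>K ` {Z. Good Z}. subgraph K1 (hypercube (m * q)) \<and> graph_iso (stretch m (hypercube q)) K1"
    using K_sub K_iso by auto
next
  show "(\<Union>K\<in>K ` {Z. Good Z}. edges K) = edges (hypercube (m * q))"
  proof
    show "(\<Union>K\<in>K ` {Z. Good Z}. edges K) \<subseteq> edges (hypercube (m * q))"
      using K_sub unfolding subgraph_def by auto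
  next
    show "edges (hypercube (m * q)) \<subseteq> (\<Union>K\<in>K ` {Z. Good Z}. edges K)"
    proof
      fix \<epsilon> assume "\<epsilon> \<in> edges (hypercube (m * q))"
      then obtain W j t where W: "W \<subseteq> {..<m*q}" "even (card W)" "j < q" "t < m" "\<epsilon> = Ed W j t"
        using Ed_cover by blast
      obtain Z w where Z: "Good Z" "length w = q" "W = sym_diff Z (B w)" "st Z W j"
        using exists_good[OF W(1,2,3)] by blast
      have "\<epsilon> \<in> edges (K Z)"
        using K_edge_intro[OF Z(1,2) W(3,4)] Z(3,4) W(5) unfolding K_def by simp
      then show "\<epsilon> \<in> (\<Union>K\<in>K ` {Z. Good Z}. edges K)" using Z(1) by blast
    qed
  qed
next
  show "\<forall>K1\<in>K ` {Z. Good Z}. \<forall>K2\<in>K ` {Z. Good Z}. K1 \<noteq> K2 \<longrightarrow> edges K1 \<inter> edges K2 = {}"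
  proof (intro ballI impI)
  fix K1 K2 assume k1: "K1 \<in> K ` {Z. Good Z}" and k2: "K2 \<in> K ` {Z. Good Z}" and ne: "K1 \<noteq> K2"
  obtain Z1 where Z1: "Good Z1" "K1 = K Z1" using k1 by blast
  obtain Z2 where Z2: "Good Z2" "K2 = K Z2" using k2 by blast
  show "edges K1 \<inter> edges K2 = {}"
  proof (rule ccontr)
    assume "edges K1 \<inter> edges K2 \<noteq> {}"
    then obtain \<epsilon> where e: "\<epsilon> \<in> edges (K Z1)" "\<epsilon> \<in> edges (K Z2)" using Z1 Z2 by blast
    obtain w1 j1 t1 where h1: "length w1 = q" "j1 < q" "t1 < m" "st Z1 (sym_diff Z1 (B w1)) j1"
       "\<epsilon> = Ed (sym_diff Z1 (B w1)) j1 t1" using K_edges[OF Z1(1) e(1)] by blast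
    obtain w2 j2 t2 where h2: "length w2 = q" "j2 < q" "t2 < m" "st Z2 (sym_diff Z2 (B w2)) j2"
       "\<epsilon> = Ed (sym_diff Z2 (B w2)) j2 t2" using K_edges[OF Z2(1) e(2)] by blast
    have s1: "sym_diff Z1 (B w1) \<subseteq> {..<m*q}" using Z1(1) B_sub by (auto simp: Good_def)
    have s2: "sym_diff Z2 (B w2) \<subseteq> {..<m*q}" using Z2(1) B_sub by (auto simp: Good_def)
    have ev1: "even (card (sym_diff Z1 (B w1)))" using h1(4) by (simp add: st_def)
    have ev2: "even (card (sym_diff Z2 (B w2)))" using h2(4) by (simp add: st_def)
    have u: "sym_diff Z1 (B w1) = sym_diff Z2 (B w2) \<and> j1 = j2"
      using Ed_unique[OF s1 ev1 h1(2,3) s2 ev2 h2(2,3)] h1(5) h2(5) by simp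
    have "Z1 = Z2" using unique_good[OF Z1(1) Z2(1) h1(1) h2(1)] u h1(4) h2(4) h1(2) by simp
    then show False using ne Z1 Z2 by simp
  qed
  qed
qed

end

theorem theorem2:
  fixes m q :: nat
  assumes "m \<ge> 1" and "q \<ge> 1"
  shows "graph_divides (stretch m (hypercube q)) (hypercube (m * q))"
proof -
  interpret cube m q using assms by unfold_locales
  show ?thesis by (rule main)
qed

end
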